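(* Assume each $f_i$ is convex with $L$-Lipschitz gradient (no strong convexity assumed), and let $x^*$ be a minimiser of $F=f+h$. Run SAGA with step size $\gamma=\frac{1}{3L}$ starting from $x^0$ with $\phi_i^0=x^0$ for all $i$, and let $\bar{x}^{k}=\frac{1}{k}\sum_{t=1}^{k}x^{t}$ for $k\ge1$. Then \[ \mathbb{E}\left[F(\bar{x}^{k})\right]-F(x^{*})\leq\frac{4n}{k}\left[\frac{2L}{n}\Vert x^{0}-x^{*}\Vert^{2}+f(x^{0})-\langle f'(x^{*}),x^{0}-x^{*}\rangle -f(x^{*})\right], \] where the expectation is over all random index choices up to step $k$.
   Context: Setting: $f(x)=\frac1n\sum_{i=1}^n f_i(x)$ with each $f_i\colon\mathbb{R}^d\to\mathbb{R}$ convex and differentiable with $L$-Lipschitz gradient $f_i'$; $h\colon\mathbb{R}^d\to\mathbb{R}\cup\{+\infty\}$ is proper, closed, convex; $F=f+h$. The proximal operator is $\mathrm{prox}^h_\gamma(y)=\operatorname{argmin}_{x}\{h(x)+\frac{1}{2\gamma}\Vert x-y\Vert^2\}$. SAGA algorithm with step size $\gamma>0$: start from $x^0\in\mathbb{R}^d$ and $\phi_i^0=x^0$ for all $i$. At iteration $k+1$, given $x^k$ and $\phi_1^k,\dots,\phi_n^k$: pick $j$ uniformly at random from $\{1,\dots,n\}$ (independently of the past); set $\phi_j^{k+1}=x^k$ and $\phi_i^{k+1}=\phi_i^k$ for $i\neq j$; set $w^{k+1}=x^k-\gamma\big[f_j'(\phi_j^{k+1})-f_j'(\phi_j^k)+\frac1n\sum_{i=1}^n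 f_i'(\phi_i^k)\big]$ and $x^{k+1}=\mathrm{prox}^h_\gamma(w^{k+1})$. *)

theory Defs
  imports "HOL-Analysis.Analysis" "HOL-Library.Extended_Real"
begin

definition epigraph :: "('a \<Rightarrow> ereal) \<Rightarrow> ('a \<times> real) set" where
  "epigraph h = {(x, t). h x \<le> ereal t}"

definition proper_fun :: "('a \<Rightarrow> ereal) \<Rightarrow> bool" where
  "proper_fun h \<longleftrightarrow> (\<forall>x. h x \<noteq> -\<infinity>) \<and> (\<exists>x. h x \<noteq> \<infinity>)"

definition closed_fun :: "('a::topological_space \<Rightarrow> ereal) \<Rightarrow> bool" where
  "closed_fun h \<longleftrightarrow> closed (epigraph h)"

definition convex_fun :: "('a::real_vector \<Rightarrow> ereal) \<Rightarrow> bool" where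
  "convex_fun h \<longleftrightarrow> convex (epigraph h)"

definition prox :: "('a::real_normed_vector \<Rightarrow> ereal) \<Rightarrow> real \<Rightarrow> 'a \<Rightarrow> 'a" where
  "prox h \<gamma> y = (THE x. \<forall>z. h x + ereal (norm (x - y)^2 / (2 * \<gamma>))
                            \<le> h z + ereal (norm (z - y)^2 / (2 * \<gamma>)))"

text \<open>One SAGA step with chosen index j, acting on the state (x^k, phi^k).
  f' i is the gradient of f_i, components indexed by i < n.\<close>

definition saga_step ::
  "(nat \<Rightarrow> 'a \<Rightarrow> 'a) \<Rightarrow> nat \<Rightarrow> real \<Rightarrow> ('a::real_normed_vector \<Rightarrow> ereal) \<Rightarrow> nat
    \<Rightarrow> 'a \<times> (nat \<Rightarrow> 'a) \<Rightarrow> 'a \<times> (nat \<Rightarrow> 'a)" where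
  "saga_step f' n \<gamma> h j s =
     (let x = fst s; \<phi> = snd s;
          w = x - \<gamma> *\<^sub>R (f' j x - f' j (\<phi> j) + (1 / real n) *\<^sub>R (\<Sum>i<n. f' i (\<phi> i)))
      in (prox h \<gamma> w, \<phi>(j := x)))"

definition saga_run ::
  "(nat \<Rightarrow> 'a \<Rightarrow> 'a) \<Rightarrow> nat \<Rightarrow> real \<Rightarrow> ('a::real_normed_vector \<Rightarrow> ereal) \<Rightarrow> 'a
    \<Rightarrow> nat list \<Rightarrow> 'a \<times> (nat \<Rightarrow> 'a)" where
  "saga_run f' n \<gamma> h x0 js = foldl (\<lambda>s j. saga_step f' n \<gamma> h j s) (x0, \<lambda>_. x0) js"

definition saga_iter ::
  "(nat \<Rightarrow> 'a \<Rightarrow> 'a) \<Rightarrow> nat \<Rightarrow> real \<Rightarrow> ('a::real_normed_vector \<Rightarrow> ereal) \<Rightarrow> 'a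
    \<Rightarrow> nat list \<Rightarrow> nat \<Rightarrow> 'a" where
  "saga_iter f' n \<gamma> h x0 js t = fst (saga_run f' n \<gamma> h x0 (take t js))"

definition saga_avg ::
  "(nat \<Rightarrow> 'a \<Rightarrow> 'a) \<Rightarrow> nat \<Rightarrow> real \<Rightarrow> ('a::real_normed_vector \<Rightarrow> ereal) \<Rightarrow> 'a
    \<Rightarrow> nat list \<Rightarrow> nat \<Rightarrow> 'a" where
  "saga_avg f' n \<gamma> h x0 js k = (1 / real k) *\<^sub>R (\<Sum>t\<in>{1..k}. saga_iter f' n \<gamma> h x0 js t)"

text \<open>All index sequences of length k with entries in {0..<n}; uniform i.i.d. choices.\<close>

definition index_seqs :: "nat \<Rightarrow> nat \<Rightarrow> nat list set" where
  "index_seqs n k = {js. length js = k \<and> set js \<subseteq> {..<n}}"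

end

theory Submission
  imports Defs
begin


lemma descent_aux:
  fixes p :: "'a::real_inner \<Rightarrow> real" and G :: "'a \<Rightarrow> 'a"
  assumes der: "\<And>z. (p has_derivative (\<lambda>v. G z \<bullet> v)) (at z)"
    and lip: "\<And>x y. norm (G x - G y) \<le> L * norm (x - y)"
  shows "p y \<le> p x + G x \<bullet> (y - x) + L/2 * (norm (y-x))^2"
    and "p x + G x \<bullet> (y - x) - L/2 * (norm (y-x))^2 \<le> p y"
proof -
  define d where "d = y - x"
  have dq: "((\<lambda>t. p (x + t *\<^sub>R d)) has_real_derivative (G (x + t *\<^sub>R d) \<bullet> d)) (at t)" for t
  proof -
    have "((\<lambda>t. x + t *\<^sub>R d) has_derivative (\<lambda>s. s *\<^sub>R d)) (at t)"
      by (auto intro!: derivative_eq_intros)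
    from has_derivative_compose[OF this der]
    have "((\<lambda>t. p (x + t *\<^sub>R d)) has_derivative (\<lambda>s. G (x + t *\<^sub>R d) \<bullet> (s *\<^sub>R d))) (at t)" .
    moreover have "(\<lambda>s. G (x + t *\<^sub>R d) \<bullet> (s *\<^sub>R d)) = (*) (G (x + t *\<^sub>R d) \<bullet> d)"
      by (rule ext) simp
    ultimately show ?thesis
      by (simp add: has_field_derivative_def)
  qed
  have bnd: "\<bar>G (x + t *\<^sub>R d) \<bullet> d - G x \<bullet> d\<bar> \<le> L * t * (norm d)^2" if "t \<ge> 0" for t
  proof -
    have "\<bar>(G (x + t *\<^sub>R d) - G x) \<bullet> d\<bar> \<le> norm (G (x + t *\<^sub>R d) - G x) * norm d"
      by (rule Cauchy_Schwarz_ineq2)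
    also have "\<dots> \<le> (L * norm (t *\<^sub>R d)) * norm d"
      using lip[of "x + t *\<^sub>R d" x] by (intro mult_right_mono) auto
    also have "\<dots> = L * t * (norm d)^2" using that by (simp add: power2_eq_square)
    finally show ?thesis by (simp add: inner_diff_left)
  qed
  define q1 where "q1 = (\<lambda>t. p (x + t *\<^sub>R d) - t * (G x \<bullet> d) - L/2 * t^2 * (norm d)^2)"
  have "q1 1 \<le> q1 0"
  proof (rule deriv_nonpos_imp_antimono[where g = q1 and a = 0 and b = 1 and g' = "\<lambda>t. G (x + t *\<^sub>R d) \<bullet> d - G x \<bullet> d - L * t * (norm d)^2"])
    fix t :: real
    show "(q1 has_real_derivative
        G (x + t *\<^sub>R d) \<bullet> d - G x \<bullet> d - L * t * (norm d)^2) (at t)" if "t \<in> {0..1}"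
      unfolding q1_def by (rule derivative_eq_intros dq refl | simp)+
    assume "t \<in> {0..1}"
    then show "G (x + t *\<^sub>R d) \<bullet> d - G x \<bullet> d - L * t * (norm d)^2 \<le> 0"
      using bnd[of t] by auto
  qed simp
  then show "p y \<le> p x + G x \<bullet> (y - x) + L/2 * (norm (y-x))^2"
    by (simp add: d_def q1_def)
  define q2 where "q2 = (\<lambda>t. - p (x + t *\<^sub>R d) + t * (G x \<bullet> d) - L/2 * t^2 * (norm d)^2)"
  have "q2 1 \<le> q2 0"
  proof (rule deriv_nonpos_imp_antimono[where g = q2 and a = 0 and b = 1 and g' = "\<lambda>t. - (G (x + t *\<^sub>R d) \<bullet> d) + G x \<bullet> d - L * t * (norm d)^2"])
    fix t :: real
    show "(q2 has_real_derivative
        - (G (x + t *\<^sub>R d) \<bullet> d) + G x \<bullet> d - L * t * (norm d)^2) (at t)" if "t \<in> {0..1}"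
      unfolding q2_def by (rule derivative_eq_intros dq refl | simp)+
    assume "t \<in> {0..1}"
    then show "- (G (x + t *\<^sub>R d) \<bullet> d) + G x \<bullet> d - L * t * (norm d)^2 \<le> 0"
      using bnd[of t] by auto
  qed simp
  then show "p x + G x \<bullet> (y - x) - L/2 * (norm (y-x))^2 \<le> p y"
    by (simp add: d_def q2_def)
qed

lemma eps_le0:
  fixes a b :: real
  assumes "\<And>t. 0 < t \<Longrightarrow> t \<le> 1 \<Longrightarrow> a \<le> t * b"
  shows "a \<le> 0"
proof (rule ccontr)
  assume a: "\<not> a \<le> 0"
  show False
  proof (cases "b \<le> 0")
    case True then show ?thesis using assms[of 1] a by auto
  next
    case False
    define t where "t = min 1 (a / (2*b))"
    have t: "0 < t" "t \<le> 1" using a False by (auto simp: t_def)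
    have "t * b \<le> a / (2*b) * b" using False by (intro mult_right_mono) (auto simp: t_def)
    also have "\<dots> = a/2" using False by auto
    finally show ?thesis using assms[OF t] a by auto
  qed
qed

lemma lin_half:
  fixes hm a c x y d :: real
  assumes "hm \<le> a/2 + c/2"
  shows "hm + (x + y)/2 - d \<le> (a + x + (c + y))/2 - d"
  using assms by (simp add: field_simps)

lemma mid_norm:
  fixes p q w :: "'a::real_inner"
  shows "(norm ((1/2) *\<^sub>R p + (1/2) *\<^sub>R q - w))^2 = ((norm (p - w))^2 + (norm (q - w))^2)/2 - (norm (p - q))^2/4"
proof -
  have w2: "w = (1/2::real) *\<^sub>R w + (1/2) *\<^sub>R w" by (simp flip: scaleR_add_left)
  have e: "(1/2) *\<^sub>R p + (1/2) *\<^sub>R q - w = (1/2) *\<^sub>R ((p - w) + (q - w))"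
    by (subst w2) (simp add: scaleR_add_right scaleR_diff_right)
  have e2: "p - q = (p - w) - (q - w)" by simp
  show ?thesis unfolding e
    apply (subst e2)
    by (simp add: power2_norm_eq_inner inner_add_left inner_add_right inner_diff_left inner_diff_right inner_commute field_simps)
qed

lemma sq_expand:
  fixes a b :: "'a::real_inner"
  shows "(norm (a + t *\<^sub>R b))^2 = (norm a)^2 + 2 * t * (a \<bullet> b) + t^2 * (norm b)^2"
  unfolding power2_norm_eq_inner by (simp add: inner_add_left inner_add_right inner_commute power2_eq_square algebra_simps)

lemma combine:
  fixes Rq AP AF AH fx fs hs Ix gd AA AB AVg AVx P g L :: real
  assumes g: "g = 1/(3*L)" and Lp: "L > 0"
  and A: "AP \<le> Rq - 2*g*(Ix - gd) + g^2*AVg"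
  and B: "AP \<le> Rq + 2*g*(hs - AH) + 2*g*(fx - AF) - 2*g*Ix + 3/2*g^2*AVx"
  and V1: "AVg \<le> 2*AA + 2*AB" and V2: "AVx \<le> 2*AA + 2*AB"
  and C: "fx - Ix + AA/(2*L) \<le> fs"
  and PB: "AB \<le> 2*L*P" and AA0: "AA \<ge> 0"
  shows "AP - 3/2*g*P + 3/2*g*(fx - fs - gd) + g/2*(AF + AH - fs - hs) \<le> Rq"
proof -
  have gp: "g > 0" using g Lp by simp
  have gL: "g * L = 1/3" using g Lp by simp
  have s1: "g^2*AVg \<le> g^2*(2*AA + 2*AB)" using V1 by (intro mult_left_mono) auto
  have s2: "g^2*AVx \<le> g^2*(2*AA + 2*AB)" using V2 by (intro mult_left_mono) auto
  have s3: "2*g*(fx - Ix + AA/(2*L)) \<le> 2*g*fs" using C gp by (intro mult_left_mono) auto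
  have s4: "g^2*AB \<le> g^2*(2*L*P)" using PB by (intro mult_left_mono) auto
  have e4: "g^2*(2*L*P) = 2/3*g*P" using gL by (simp add: power2_eq_square algebra_simps)
  have e3: "2*g*(AA/(2*L)) = 3*g^2*AA" using g Lp by (simp add: power2_eq_square field_simps)
  have s5: "0 \<le> g^2 * AA" using AA0 by simp
  have A': "AP \<le> Rq - 2*(g*Ix) + 2*(g*gd) + g^2*AVg" using A by (simp add: algebra_simps)
  have B': "AP \<le> Rq + 2*(g*hs) - 2*(g*AH) + 2*(g*fx) - 2*(g*AF) - 2*(g*Ix) + 3/2*(g^2*AVx)"
    using B by (simp add: algebra_simps)
  have s1': "g^2*AVg \<le> 2*(g^2*AA) + 2*(g^2*AB)" using s1 by (simp add: algebra_simps)
  have s2': "g^2*AVx \<le> 2*(g^2*AA) + 2*(g^2*AB)" using s2 by (simp add: algebra_simps)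
  have s3': "2*(g*fx) - 2*(g*Ix) + 3*(g^2*AA) \<le> 2*(g*fs)" using s3 e3 by (simp add: algebra_simps)
  have s4': "g^2*AB \<le> 2/3*(g*P)" using s4 e4 by simp
  have "AP - 3/2*(g*P) + 3/2*(g*fx) - 3/2*(g*fs) - 3/2*(g*gd) + 1/2*(g*AF) + 1/2*(g*AH) - 1/2*(g*fs) - 1/2*(g*hs) \<le> Rq"
    using A' B' s1' s2' s3' s4' s5 by linarith
  then show ?thesis by (simp add: field_simps)
qed

lemma var_sum:
  fixes Y :: "nat \<Rightarrow> 'a::real_inner"
  assumes n: "n \<ge> 1"
  shows "(\<Sum>j<n. (norm (Y j - (1/real n) *\<^sub>R (\<Sum>i<n. Y i)))^2) \<le> (\<Sum>j<n. (norm (Y j))^2)"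
proof -
  define c where "c = (1/real n) *\<^sub>R (\<Sum>i<n. Y i)"
  have sc: "(\<Sum>i<n. Y i) = real n *\<^sub>R c" using n by (simp add: c_def)
  have "(\<Sum>j<n. (norm (Y j - c))^2) = (\<Sum>j<n. (norm (Y j))^2 - 2 * (Y j \<bullet> c) + (norm c)^2)"
    by (rule sum.cong) (simp_all add: power2_norm_eq_inner inner_diff_left inner_diff_right inner_commute)
  also have "\<dots> = (\<Sum>j<n. (norm (Y j))^2) - 2 * ((\<Sum>j<n. Y j) \<bullet> c) + real n * (norm c)^2"
    by (simp add: sum.distrib sum_subtractf sum_distrib_left inner_sum_left)
  also have "\<dots> = (\<Sum>j<n. (norm (Y j))^2) - real n * (norm c)^2"
    by (simp add: sc power2_norm_eq_inner)
  also have "\<dots> \<le> (\<Sum>j<n. (norm (Y j))^2)" by simp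
  finally show ?thesis by (simp add: c_def)
qed

lemma young2:
  fixes X Y :: "'a::real_inner"
  shows "2 * (X \<bullet> Y) \<le> 3/2 * (norm X)^2 + 2/3 * (norm Y)^2"
proof -
  have "0 \<le> (norm (X - (2/3) *\<^sub>R Y))^2" by simp
  also have "(norm (X - (2/3) *\<^sub>R Y))^2 = (norm X)^2 - 4/3 * (X \<bullet> Y) + 4/9 * (norm Y)^2"
    unfolding power2_norm_eq_inner by (simp add: inner_diff_left inner_diff_right inner_commute algebra_simps)
  finally show ?thesis by simp
qed

lemma sq_le2:
  fixes a b :: "'a::real_inner"
  shows "(norm (a - b))^2 \<le> 2 * (norm a)^2 + 2 * (norm b)^2"
proof -
  have "0 \<le> (norm (a + b))^2" by simp
  moreover have "(norm (a - b))^2 + (norm (a + b))^2 = 2 * (norm a)^2 + 2 * (norm b)^2"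
    unfolding power2_norm_eq_inner by (simp add: inner_diff_left inner_diff_right inner_add_left inner_add_right inner_commute algebra_simps)
  ultimately show ?thesis by linarith
qed

lemma nonexp_alg:
  fixes e u :: "'a::real_inner"
  assumes "e \<bullet> e \<le> u \<bullet> e"
  shows "(norm e)^2 \<le> (norm u)^2"
proof -
  have "(norm e)^2 \<le> norm u * norm e"
    using assms norm_cauchy_schwarz[of u e] by (simp add: power2_norm_eq_inner)
  then have "norm e \<le> norm u"
    by (cases "norm e = 0") (auto simp: power2_eq_square)
  then show ?thesis by (simp add: power_mono)
qed

locale saga =
  fixes fs :: "nat \<Rightarrow> 'a::euclidean_space \<Rightarrow> real"
    and f' :: "nat \<Rightarrow> 'a \<Rightarrow> 'a"
    and h :: "'a \<Rightarrow> ereal"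
    and n :: nat and L :: real and xstar :: 'a
  assumes n_pos: "n \<ge> 1"
    and L_pos: "L > 0"
    and conv: "\<And>i. i < n \<Longrightarrow> convex_on UNIV (fs i)"
    and grad: "\<And>i x. i < n \<Longrightarrow> (fs i has_derivative (\<lambda>v. f' i x \<bullet> v)) (at x)"
    and lip: "\<And>i x y. i < n \<Longrightarrow> norm (f' i x - f' i y) \<le> L * norm (x - y)"
    and h_proper: "proper_fun h" and h_closed: "closed_fun h" and h_convex: "convex_fun h"
    and min: "\<And>x. ereal ((1 / real n) * (\<Sum>i<n. fs i xstar)) + h xstar
                 \<le> ereal ((1 / real n) * (\<Sum>i<n. fs i x)) + h x"
begin

definition ff where "ff x = (1 / real n) * (\<Sum>i<n. fs i x)"
definition gg where "gg x = (1 / real n) *\<^sub>R (\<Sum>i<n. f' i x)"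

lemma descent_up: "i < n \<Longrightarrow> fs i y \<le> fs i x + f' i x \<bullet> (y - x) + L/2 * (norm (y-x))^2"
  using descent_aux(1)[of "fs i" "f' i" L] grad lip by blast

lemma descent_lo: "i < n \<Longrightarrow> fs i x + f' i x \<bullet> (y - x) - L/2 * (norm (y-x))^2 \<le> fs i y"
  using descent_aux(2)[of "fs i" "f' i" L] grad lip by blast

lemma grad_ineq:
  assumes i: "i < n" shows "fs i x + f' i x \<bullet> (z - x) \<le> fs i z"
proof -
  define d where "d = z - x"
  have "fs i x + f' i x \<bullet> d - fs i z \<le> 0"
  proof (rule eps_le0[where b = "L/2 * (norm d)^2"])
    fix t :: real assume t: "0 < t" "t \<le> 1"
    have e: "x + t *\<^sub>R d = (1 - t) *\<^sub>R x + t *\<^sub>R z" by (simp add: d_def algebra_simps)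
    have c: "fs i (x + t *\<^sub>R d) \<le> (1 - t) * fs i x + t * fs i z"
      unfolding e using convex_onD[OF conv[OF i], of t x z] t by auto
    have l: "fs i x + f' i x \<bullet> (t *\<^sub>R d) - L/2 * (norm (t *\<^sub>R d))^2 \<le> fs i (x + t *\<^sub>R d)"
      using descent_lo[OF i, of x "x + t *\<^sub>R d"] by simp
    have "t * (fs i x + f' i x \<bullet> d - fs i z) \<le> t * (t * (L/2 * (norm d)^2))"
      using c l t by (simp add: power2_eq_square algebra_simps)
    then show "fs i x + f' i x \<bullet> d - fs i z \<le> t * (L / 2 * (norm d)\<^sup>2)"
      using t by simp
  qed
  then show ?thesis by (simp add: d_def)
qed

lemma coco:
  assumes i: "i < n"
  shows "fs i x + f' i x \<bullet> (y - x) + (norm (f' i y - f' i x))^2 / (2*L) \<le> fs i y"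
proof -
  define p where "p z = fs i z - f' i x \<bullet> z" for z
  define G where "G z = f' i z - f' i x" for z
  have der: "(p has_derivative (\<lambda>v. G z \<bullet> v)) (at z)" for z
  proof -
    have "(p has_derivative (\<lambda>v. f' i z \<bullet> v - f' i x \<bullet> v)) (at z)"
      unfolding p_def by (rule derivative_eq_intros grad[OF i] | simp)+
    then show ?thesis by (simp add: G_def inner_diff_left)
  qed
  have lG: "norm (G u - G v) \<le> L * norm (u - v)" for u v
    using lip[OF i, of u v] by (simp add: G_def)
  define u where "u = y - (1/L) *\<^sub>R G y"
  have "p x \<le> p u" using grad_ineq[OF i, of x u] by (simp add: p_def inner_diff_right)
  also have "\<dots> \<le> p y + G y \<bullet> (u - y) + L/2 * (norm (u - y))^2"
    by (rule descent_aux(1)[OF der lG])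
  also have "\<dots> = p y - (norm (G y))^2 / (2*L)"
    using L_pos by (simp add: u_def power2_norm_eq_inner field_simps flip: power2_eq_square)
  finally show ?thesis
    by (simp add: p_def G_def inner_diff_right)
qed


definition hr where "hr x = real_of_ereal (h x)"

lemma h_nm: "h x \<noteq> -\<infinity>"
  using h_proper by (auto simp: proper_fun_def)

lemma h_eq: "h x \<noteq> \<infinity> \<Longrightarrow> h x = ereal (hr x)"
  using h_nm[of x] by (cases "h x") (auto simp: hr_def)

lemma hs_fin: "h xstar \<noteq> \<infinity>"
proof -
  obtain x1 where x1: "h x1 \<noteq> \<infinity>" using h_proper by (auto simp: proper_fun_def)
  show ?thesis
  proof
    assume "h xstar = \<infinity>"
    then show False using min[of x1] h_eq[OF x1] by simp
  qed
qed

lemma h_conv: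
  assumes "h x \<noteq> \<infinity>" "h y \<noteq> \<infinity>" "0 \<le> t" "t \<le> 1"
  shows "h ((1-t) *\<^sub>R x + t *\<^sub>R y) \<le> ereal ((1-t) * hr x + t * hr y)"
proof -
  have "(x, hr x) \<in> epigraph h" "(y, hr y) \<in> epigraph h"
    using h_eq assms by (auto simp: epigraph_def)
  from convexD[OF h_convex[unfolded convex_fun_def] this, of "1-t" t]
  show ?thesis using assms by (auto simp: epigraph_def)
qed

lemma h_fin_conv:
  assumes "h x \<noteq> \<infinity>" "h y \<noteq> \<infinity>" "0 \<le> t" "t \<le> 1"
  shows "h ((1-t) *\<^sub>R x + t *\<^sub>R y) \<noteq> \<infinity>"
  using h_conv[OF assms] by auto

lemma h_conv_r:
  assumes "h x \<noteq> \<infinity>" "h y \<noteq> \<infinity>" "0 \<le> t" "t \<le> 1"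
  shows "hr ((1-t) *\<^sub>R x + t *\<^sub>R y) \<le> (1-t) * hr x + t * hr y"
  using h_conv[OF assms] h_eq[OF h_fin_conv[OF assms]] by simp

lemma gg_inner: "gg x \<bullet> d = (1 / real n) * (\<Sum>i<n. f' i x \<bullet> d)"
  by (simp add: gg_def inner_sum_left)

lemma ff_descent: "ff y \<le> ff x + gg x \<bullet> (y - x) + L/2 * (norm (y-x))^2"
proof -
  have "(\<Sum>i<n. fs i y) \<le> (\<Sum>i<n. fs i x + f' i x \<bullet> (y - x) + L/2 * (norm (y-x))^2)"
    by (rule sum_mono) (rule descent_up, simp)
  also have "\<dots> = (\<Sum>i<n. fs i x) + (\<Sum>i<n. f' i x \<bullet> (y - x)) + real n * (L/2 * (norm (y-x))^2)"
    by (simp add: sum.distrib)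
  finally have "(1/real n) * (\<Sum>i<n. fs i y) \<le> (1/real n) * ((\<Sum>i<n. fs i x) + (\<Sum>i<n. f' i x \<bullet> (y - x)) + real n * (L/2 * (norm (y-x))^2))"
    using n_pos by (intro mult_left_mono) auto
  then show ?thesis using n_pos by (simp add: ff_def gg_inner field_simps)
qed

lemma min_r: "h z \<noteq> \<infinity> \<Longrightarrow> ff xstar + hr xstar \<le> ff z + hr z"
  using min[of z] h_eq[of z] h_eq[OF hs_fin] unfolding ff_def
  by simp

lemma minorant:
  assumes hz: "h z \<noteq> \<infinity>"
  shows "hr xstar - gg xstar \<bullet> (z - xstar) \<le> hr z"
proof -
  define d where "d = z - xstar"
  have "hr xstar - hr z - gg xstar \<bullet> d \<le> 0"
  proof (rule eps_le0[where b = "L/2 * (norm d)^2"])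
    fix t :: real assume t: "0 < t" "t \<le> 1"
    have e: "xstar + t *\<^sub>R d = (1 - t) *\<^sub>R xstar + t *\<^sub>R z" by (simp add: d_def algebra_simps)
    have c: "hr (xstar + t *\<^sub>R d) \<le> (1 - t) * hr xstar + t * hr z"
      unfolding e using h_conv_r[OF hs_fin hz, of t] t by auto
    have fin: "h (xstar + t *\<^sub>R d) \<noteq> \<infinity>" unfolding e using h_fin_conv[OF hs_fin hz, of t] t by auto
    have m: "ff xstar + hr xstar \<le> ff (xstar + t *\<^sub>R d) + hr (xstar + t *\<^sub>R d)" by (rule min_r[OF fin])
    have l: "ff (xstar + t *\<^sub>R d) \<le> ff xstar + gg xstar \<bullet> (t *\<^sub>R d) + L/2 * (norm (t *\<^sub>R d))^2"
      using ff_descent[of "xstar + t *\<^sub>R d" xstar] by simp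
    have "t * (hr xstar - hr z - gg xstar \<bullet> d) \<le> t * (t * (L/2 * (norm d)^2))"
      using c l m t by (simp add: power2_eq_square algebra_simps)
    then show "hr xstar - hr z - gg xstar \<bullet> d \<le> t * (L / 2 * (norm d)\<^sup>2)"
      using t by simp
  qed
  then show ?thesis by (simp add: d_def)
qed


lemma prox_exists:
  assumes gp: "gm > 0"
  shows "\<exists>p. h p \<noteq> \<infinity> \<and> (\<forall>z. h p + ereal ((norm (p - w))^2 / (2*gm)) \<le> h z + ereal ((norm (z - w))^2 / (2*gm)))"
proof -
  define V where "V z = hr z + (norm (z - w))^2 / (2*gm)" for z
  define S where "S = {z. h z \<noteq> \<infinity>}"
  define b where "b = norm (gg xstar)"
  have b0: "b \<ge> 0" by (simp add: b_def)
  have lowr: "hr xstar - b * (r + norm (w - xstar)) + r^2/(2*gm) \<le> V z" if "z \<in> S" "r = norm (z - w)" for z r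
  proof -
    have m: "hr xstar - gg xstar \<bullet> (z - xstar) \<le> hr z" using minorant that by (auto simp: S_def)
    have "gg xstar \<bullet> (z - xstar) \<le> b * norm (z - xstar)" unfolding b_def by (rule norm_cauchy_schwarz)
    also have "\<dots> \<le> b * (r + norm (w - xstar))"
      using b0 that norm_triangle_ineq[of "z - w" "w - xstar"] by (intro mult_left_mono) auto
    finally show ?thesis using m by (simp add: V_def that)
  qed
  define lb where "lb = hr xstar - b * norm (w - xstar) - gm * b^2 / 2"
  have low: "lb \<le> V z" if "z \<in> S" for z
  proof -
    define r where "r = norm (z - w)"
    have "0 \<le> (r - gm * b)^2 / (2*gm)" using gp by auto
    also have "(r - gm * b)^2 / (2*gm) = r^2/(2*gm) - b * r + gm * b^2/2"
      using gp by (simp add: power2_eq_square field_simps)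
    finally show ?thesis using lowr[OF that r_def] by (simp add: lb_def algebra_simps)
  qed
  have Sne: "V ` S \<noteq> {}" using hs_fin by (auto simp: S_def)
  have bdd: "bdd_below (V ` S)" using low by (auto intro!: bdd_belowI2)
  define m where "m = Inf (V ` S)"
  have mle: "m \<le> V z" if "z \<in> S" for z using cInf_lower[OF _ bdd] that by (auto simp: m_def)
  have "\<forall>k. \<exists>z. z \<in> S \<and> V z < m + 1 / real (Suc k)"
  proof
    fix k
    have "Inf (V ` S) < m + 1 / real (Suc k)" by (simp add: m_def)
    then show "\<exists>z. z \<in> S \<and> V z < m + 1 / real (Suc k)"
      using cInf_less_iff[OF Sne bdd] by auto
  qed
  then obtain zs where zs: "\<And>k. zs k \<in> S" "\<And>k. V (zs k) < m + 1 / real (Suc k)"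
    by metis
  define C where "C = m + 1 - hr xstar + b * norm (w - xstar)"
  define B where "B = 2 * gm * (b + \<bar>C\<bar>) + 1"
  have zb: "norm (zs k - w) \<le> B" for k
  proof (rule ccontr)
    define r where "r = norm (zs k - w)"
    assume "\<not> norm (zs k - w) \<le> B"
    then have rB: "r > B" by (simp add: r_def)
    have r1: "r \<ge> 1" using rB gp b0 by (simp add: B_def) (smt (verit) mult_nonneg_nonneg)
    have "r / (2*gm) > b + \<bar>C\<bar>" using rB gp by (simp add: B_def field_simps)
    then have q: "r/(2*gm) - b > \<bar>C\<bar>" by simp
    have f3: "r * (r/(2*gm) - b) \<ge> 1 * (r/(2*gm) - b)"
      using r1 q by (intro mult_right_mono) auto
    have f2: "r * (r/(2*gm) - b) = r^2/(2*gm) - b * r" by (simp add: power2_eq_square field_simps)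
    have Vk: "V (zs k) \<le> m + 1"
      using zs(2)[of k] by (smt (verit) divide_le_eq_1 of_nat_0_le_iff of_nat_Suc)
    have f0: "b * (r + norm (w - xstar)) = b * r + b * norm (w - xstar)" by (simp add: distrib_left)
    have f1: "r^2/(2*gm) - b*r \<le> C" using lowr[OF zs(1) r_def] Vk f0 unfolding C_def by linarith
    have f4: "r/(2*gm) - b \<le> r * (r/(2*gm) - b)" using f3 by simp
    show False using f1 f2 f4 q abs_ge_self[of C] by linarith
  qed
  have "bounded (range zs)"
    by (rule bounded_subset[OF bounded_cball[of w B]]) (use zb in \<open>auto simp: dist_norm norm_minus_commute\<close>)
  then obtain l r where r: "strict_mono r" and lim: "(zs \<circ> r) \<longlonglongrightarrow> l"
    using bounded_imp_convergent_subsequence by blast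
  have lim': "(\<lambda>k. zs (r k)) \<longlonglongrightarrow> l" using lim by (simp add: o_def)
  have Vlim: "(\<lambda>k. V (zs (r k))) \<longlonglongrightarrow> m"
  proof (rule tendsto_sandwich[where f = "\<lambda>k. m" and h = "\<lambda>k. m + 1 / real (Suc k)"])
    show "\<forall>\<^sub>F k in sequentially. m \<le> V (zs (r k))" using mle zs(1) by auto
    have "V (zs (r k)) \<le> m + 1 / real (Suc k)" for k
    proof -
      have "k \<le> r k" using seq_suble[OF r] by simp
      then have "1 / real (Suc (r k)) \<le> 1 / real (Suc k)" by (simp add: frac_le)
      then show ?thesis using zs(2)[of "r k"] by simp
    qed
    then show "\<forall>\<^sub>F k in sequentially. V (zs (r k)) \<le> m + 1 / real (Suc k)" by auto
    have "(\<lambda>k. 1 / real (Suc k)) \<longlonglongrightarrow> 0"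
      using LIMSEQ_inverse_real_of_nat by (simp add: inverse_eq_divide)
    then show "(\<lambda>k. m + 1 / real (Suc k)) \<longlonglongrightarrow> m"
      using tendsto_add[of "\<lambda>k. m" m sequentially "\<lambda>k. 1 / real (Suc k)" 0] by simp
  qed simp
  have hlim: "(\<lambda>k. hr (zs (r k))) \<longlonglongrightarrow> m - (norm (l - w))^2 / (2*gm)"
  proof -
    have "(\<lambda>k. V (zs (r k)) - (norm (zs (r k) - w))^2 / (2*gm)) \<longlonglongrightarrow> m - (norm (l - w))^2 / (2*gm)"
      using gp by (intro tendsto_intros Vlim lim') auto
    then show ?thesis by (simp add: V_def)
  qed
  have "(l, m - (norm (l - w))^2 / (2*gm)) \<in> epigraph h"
  proof -
    have inE: "\<forall>k. (zs (r k), hr (zs (r k))) \<in> epigraph h"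
      using zs(1) h_eq by (auto simp: S_def epigraph_def)
    have lim2: "(\<lambda>k. (zs (r k), hr (zs (r k)))) \<longlonglongrightarrow> (l, m - (norm (l - w))^2 / (2*gm))"
      by (intro tendsto_Pair lim' hlim)
    note cl = h_closed[unfolded closed_fun_def closed_sequential_limits, rule_format]
    show ?thesis by (rule cl) (use inE lim2 in auto)
  qed
  then have hl: "h l \<le> ereal (m - (norm (l - w))^2 / (2*gm))" by (simp add: epigraph_def)
  then have lS: "h l \<noteq> \<infinity>" by auto
  have "V l \<le> m" using hl h_eq[OF lS] by (simp add: V_def)
  show ?thesis
  proof (intro exI conjI allI)
    show "h l \<noteq> \<infinity>" by (rule lS)
    fix z
    show "h l + ereal ((norm (l - w))\<^sup>2 / (2 * gm)) \<le> h z + ereal ((norm (z - w))\<^sup>2 / (2 * gm))"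
    proof (cases "h z = \<infinity>")
      case True then show ?thesis by simp
    next
      case False
      then have "V l \<le> V z" using mle[of z] \<open>V l \<le> m\<close> by (auto simp: S_def)
      then show ?thesis using h_eq[OF lS] h_eq[OF False] by (simp add: V_def)
    qed
  qed
qed

lemma prox_unique:
  assumes gp: "gm > 0"
    and P: "\<forall>z. h p + ereal ((norm (p - w))^2 / (2*gm)) \<le> h z + ereal ((norm (z - w))^2 / (2*gm))"
    and Q: "\<forall>z. h q + ereal ((norm (q - w))^2 / (2*gm)) \<le> h z + ereal ((norm (z - w))^2 / (2*gm))"
  shows "q = p"
proof -
  have pf: "h p \<noteq> \<infinity>" using P[rule_format, of xstar] h_eq[OF hs_fin] by auto
  have qf: "h q \<noteq> \<infinity>" using Q[rule_format, of xstar] h_eq[OF hs_fin] by auto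
  define V where "V z = hr z + (norm (z - w))^2 / (2*gm)" for z
  have Vpq: "V p \<le> V q" using P[rule_format, of q] h_eq[OF pf] h_eq[OF qf] by (simp add: V_def)
  have Vqp: "V q \<le> V p" using Q[rule_format, of p] h_eq[OF pf] h_eq[OF qf] by (simp add: V_def)
  define mid where "mid = (1 - 1/2) *\<^sub>R p + (1/2) *\<^sub>R q"
  have mf: "h mid \<noteq> \<infinity>" unfolding mid_def by (rule h_fin_conv[OF pf qf]) auto
  have hm: "hr mid \<le> (1 - 1/2) * hr p + (1/2) * hr q" unfolding mid_def by (rule h_conv_r[OF pf qf]) auto
  have nm: "(norm (mid - w))^2 = ((norm (p - w))^2 + (norm (q - w))^2)/2 - (norm (p - q))^2/4"
    using mid_norm[of p q w] by (simp add: mid_def)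
  have "V p \<le> V mid" using P[rule_format, of mid] h_eq[OF pf] h_eq[OF mf] by (simp add: V_def)
  also have "\<dots> = hr mid + (((norm (p - w))^2 + (norm (q - w))^2)/2 - (norm (p - q))^2/4) / (2*gm)"
    by (simp add: V_def nm)
  also have "\<dots> = hr mid + ((norm (p - w))^2 / (2*gm) + (norm (q - w))^2/(2*gm))/2 - (norm (p - q))^2 / (8*gm)"
    using gp by (simp add: field_simps)
  also have "hr mid + ((norm (p - w))^2 / (2*gm) + (norm (q - w))^2/(2*gm))/2 - (norm (p - q))^2 / (8*gm)
      \<le> (V p + V q)/2 - (norm (p - q))^2 / (8*gm)"
  proof -
    have "hr mid \<le> hr p / 2 + hr q / 2" using hm by simp
    then show ?thesis unfolding V_def by (rule lin_half)
  qed
  finally have "(norm (p - q))^2 / (8*gm) \<le> 0" using Vqp by argo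
  then have "(norm (p - q))^2 \<le> 0" using gp by (simp add: divide_le_0_iff)
  then show ?thesis by simp
qed

lemma prox_props:
  assumes gp: "gm > 0"
  shows "h (prox h gm w) \<noteq> \<infinity>"
    and "h z \<noteq> \<infinity> \<Longrightarrow> hr (prox h gm w) + (w - prox h gm w) \<bullet> (z - prox h gm w) / gm \<le> hr z"
proof -
  obtain p where pf: "h p \<noteq> \<infinity>"
    and P: "\<forall>z. h p + ereal ((norm (p - w))^2 / (2*gm)) \<le> h z + ereal ((norm (z - w))^2 / (2*gm))"
    using prox_exists[OF gp, of w] by blast
  have pe: "prox h gm w = p"
    unfolding prox_def
  proof (rule the_equality)
    show "\<forall>z. h p + ereal ((norm (p - w))^2 / (2*gm)) \<le> h z + ereal ((norm (z - w))^2 / (2*gm))" by (rule P)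
    fix q assume "\<forall>z. h q + ereal ((norm (q - w))^2 / (2*gm)) \<le> h z + ereal ((norm (z - w))^2 / (2*gm))"
    then show "q = p" by (rule prox_unique[OF gp P])
  qed
  show "h (prox h gm w) \<noteq> \<infinity>" using pf pe by simp
  assume hz: "h z \<noteq> \<infinity>"
  have "hr p - hr z + (w - p) \<bullet> (z - p) / gm \<le> 0"
  proof (rule eps_le0[where b = "(norm (z - p))^2 / (2*gm)"])
    fix t :: real assume t: "0 < t" "t \<le> 1"
    define zt where "zt = (1 - t) *\<^sub>R p + t *\<^sub>R z"
    have zf: "h zt \<noteq> \<infinity>" unfolding zt_def by (rule h_fin_conv[OF pf hz]) (use t in auto)
    have hc: "hr zt \<le> (1 - t) * hr p + t * hr z" unfolding zt_def by (rule h_conv_r[OF pf hz]) (use t in auto)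
    have "hr p + (norm (p - w))^2 / (2*gm) \<le> hr zt + (norm (zt - w))^2 / (2*gm)"
      using P[rule_format, of zt] h_eq[OF pf] h_eq[OF zf] by simp
    moreover have "zt - w = (p - w) + t *\<^sub>R (z - p)" by (simp add: zt_def algebra_simps)
    moreover have "(p - w) \<bullet> (z - p) = - ((w - p) \<bullet> (z - p))" by (simp add: inner_diff_left)
    ultimately have "hr p + (norm (p - w))^2 / (2*gm) \<le> (1 - t) * hr p + t * hr z
       + ((norm (p - w))^2 - 2 * t * ((w - p) \<bullet> (z - p)) + t^2 * (norm (z - p))^2) / (2*gm)"
      using hc sq_expand[of "p - w" t "z - p"] by (simp add: divide_right_mono add_mono)
    then have "t * (hr p - hr z + (w - p) \<bullet> (z - p) / gm) \<le> t * (t * ((norm (z - p))^2 / (2*gm)))"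
      using gp by (simp add: field_simps power2_eq_square)
    then show "hr p - hr z + (w - p) \<bullet> (z - p) / gm \<le> t * ((norm (z - p))^2 / (2*gm))"
      by (rule mult_left_le_imp_le) (use t in auto)
  qed
  then show "hr (prox h gm w) + (w - prox h gm w) \<bullet> (z - prox h gm w) / gm \<le> hr z"
    using pe by simp
qed


definition gam where "gam = 1 / (3 * L)"
definition Dd where "Dd i y = fs i y - fs i xstar - f' i xstar \<bullet> (y - xstar)"
definition Psi where "Psi \<phi> = (1 / real n) * (\<Sum>i<n. Dd i (\<phi> i))"
definition Tf where "Tf s = (norm (fst s - xstar))^2 + 3/2 * gam * real n * Psi (snd s)"
definition Fr where "Fr x = ff x + hr x"

lemma gam_pos: "gam > 0" using L_pos by (simp add: gam_def)

lemma Dd_nonneg: "i < n \<Longrightarrow> 0 \<le> Dd i y"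
  using grad_ineq[of i xstar y] by (simp add: Dd_def)

lemma Psi_nonneg: "0 \<le> Psi \<phi>"
  unfolding Psi_def by (intro mult_nonneg_nonneg sum_nonneg Dd_nonneg) auto

lemma Tf_nonneg: "0 \<le> Tf s"
  unfolding Tf_def using Psi_nonneg gam_pos by (intro add_nonneg_nonneg mult_nonneg_nonneg) auto

lemma step_fin: "h (fst (saga_step f' n gam h j s)) \<noteq> \<infinity>"
  by (simp add: saga_step_def Let_def prox_props(1)[OF gam_pos])

lemma Dd_avg: "(1 / real n) * (\<Sum>i<n. Dd i x) = ff x - ff xstar - gg xstar \<bullet> (x - xstar)"
  using n_pos by (simp add: Dd_def sum_subtractf sum.distrib ff_def gg_inner field_simps)

lemma Psi_upd: "(\<Sum>j<n. Psi (\<phi>(j := x))) = (real n - 1) * Psi \<phi> + (ff x - ff xstar - gg xstar \<bullet> (x - xstar))"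
proof -
  define S where "S = (\<Sum>i<n. Dd i (\<phi> i))"
  have e: "(\<Sum>i<n. Dd i (if i = j then x else \<phi> i)) = S + (Dd j x - Dd j (\<phi> j))" if j: "j < n" for j
  proof -
    have "(\<Sum>i<n. Dd i (if i = j then x else \<phi> i)) = (\<Sum>i<n. Dd i (\<phi> i) + (if i = j then Dd j x - Dd j (\<phi> j) else 0))"
      by (rule sum.cong) auto
    also have "\<dots> = S + (Dd j x - Dd j (\<phi> j))" using j by (simp add: sum.distrib S_def)
    finally show ?thesis .
  qed
  have "(\<Sum>j<n. Psi (\<phi>(j := x))) = (\<Sum>j<n. (1 / real n) * (S + (Dd j x - Dd j (\<phi> j))))"
    unfolding Psi_def by (rule sum.cong) (auto simp: e)
  also have "\<dots> = (1 / real n) * (\<Sum>j<n. S + (Dd j x - Dd j (\<phi> j)))"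
    by (simp only: sum_distrib_left)
  also have "\<dots> = (1 / real n) * (real n * S + (\<Sum>j<n. Dd j x) - S)"
    by (simp add: sum.distrib sum_subtractf S_def)
  also have "\<dots> = (real n - 1) * ((1 / real n) * S) + (1 / real n) * (\<Sum>j<n. Dd j x)"
    using n_pos by (simp add: field_simps)
  finally show ?thesis unfolding Dd_avg by (simp add: Psi_def S_def)
qed

lemma step:
  "(1 / real n) * (\<Sum>j<n. Tf (saga_step f' n gam h j s) + gam/2 * (Fr (fst (saga_step f' n gam h j s)) - Fr xstar)) \<le> Tf s"
proof -
  obtain x \<phi> where s: "s = (x, \<phi>)" by (cases s)
  define N where "N = real n"
  have N: "N \<ge> 1" using n_pos by (simp add: N_def)
  define gb where "gb = (1 / real n) *\<^sub>R (\<Sum>i<n. f' i (\<phi> i))"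
  define v where "v j = f' j x - f' j (\<phi> j) + gb" for j
  define w where "w j = x - gam *\<^sub>R v j" for j
  define p where "p j = prox h gam (w j)" for j
  define gx where "gx = gg x"
  define gs where "gs = gg xstar"
  define a where "a j = f' j x - f' j xstar" for j
  define b where "b j = f' j (\<phi> j) - f' j xstar" for j
  have st: "saga_step f' n gam h j s = (p j, \<phi>(j := x))" for j
    by (simp add: s saga_step_def Let_def p_def w_def v_def gb_def)
  have pf: "h (p j) \<noteq> \<infinity>" for j using prox_props(1)[OF gam_pos] by (simp add: p_def)
  have VI: "hr (p j) + (w j - p j) \<bullet> (xstar - p j) / gam \<le> hr xstar" for j
    using prox_props(2)[OF gam_pos hs_fin] by (simp add: p_def)
  have sumv: "(\<Sum>j<n. v j) = N *\<^sub>R gx"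
  proof -
    have "(\<Sum>j<n. v j) = (\<Sum>j<n. f' j x) - (\<Sum>j<n. f' j (\<phi> j)) + N *\<^sub>R gb"
      by (simp add: v_def sum.distrib sum_subtractf N_def sum_constant_scaleR)
    also have "N *\<^sub>R gb = (\<Sum>j<n. f' j (\<phi> j))" using N by (simp add: gb_def N_def)
    finally show ?thesis using N by (simp add: gx_def gg_def N_def)
  qed
  have Aj: "(norm (p j - xstar))^2 \<le> (norm (x - xstar))^2 - 2 * gam * ((x - xstar) \<bullet> (v j - gs)) + gam^2 * (norm (v j - gs))^2" for j
  proof -
    have m: "hr xstar - gs \<bullet> (p j - xstar) \<le> hr (p j)" using minorant[OF pf] by (simp add: gs_def)
    have "(w j - p j) \<bullet> (xstar - p j) / gam \<le> gs \<bullet> (p j - xstar)" using VI[of j] m by linarith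
    then have q: "(w j - p j) \<bullet> (xstar - p j) \<le> gam * (gs \<bullet> (p j - xstar))"
      using gam_pos by (simp add: divide_le_eq mult.commute)
    define e where "e = p j - xstar"
    define u where "u = (x - xstar) + (- gam) *\<^sub>R (v j - gs)"
    have ue: "u - e = (w j - p j) + gam *\<^sub>R gs" by (simp add: u_def e_def w_def algebra_simps)
    have "(u - e) \<bullet> e = - ((w j - p j) \<bullet> (xstar - p j)) + gam * (gs \<bullet> (p j - xstar))"
      unfolding ue by (simp add: e_def inner_add_left inner_diff_right right_diff_distrib)
    then have "e \<bullet> e \<le> u \<bullet> e" using q by (simp add: inner_diff_left)
    then have "(norm e)^2 \<le> (norm u)^2" by (rule nonexp_alg)
    also have "(norm u)^2 = (norm (x - xstar))^2 + 2 * (- gam) * ((x - xstar) \<bullet> (v j - gs)) + (- gam)^2 * (norm (v j - gs))^2"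
      unfolding u_def by (rule sq_expand)
    finally show ?thesis by (simp add: e_def)
  qed
  have Bj: "(norm (p j - xstar))^2 \<le> (norm (x - xstar))^2 + 2*gam*(hr xstar - hr (p j)) + 2*gam*(ff x - ff (p j))
      - 2*gam*(v j \<bullet> (x - xstar)) + 3/2*gam^2*(norm (v j - gx))^2" for j
  proof -
    define P where "P = p j"
    have vi: "(w j - P) \<bullet> (xstar - P) \<le> gam * (hr xstar - hr P)"
      using VI[of j] gam_pos by (simp add: P_def divide_le_eq field_simps)
    have wP: "(w j - P) \<bullet> (xstar - P) = (x - P) \<bullet> (xstar - P) - gam * (v j \<bullet> (xstar - P))"
      by (simp add: w_def inner_diff_left)
    have id: "(norm (P - xstar))^2 = (norm (x - xstar))^2 - (norm (x - P))^2 + 2 * ((x - P) \<bullet> (xstar - P))"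
      unfolding power2_norm_eq_inner
      by (simp add: inner_diff_left inner_diff_right inner_commute algebra_simps)
    have vs: "v j \<bullet> (xstar - P) = - (v j \<bullet> (x - xstar)) + gx \<bullet> (x - P) + (v j - gx) \<bullet> (x - P)"
      by (simp add: inner_diff_left inner_diff_right inner_commute algebra_simps)
    have desc: "ff P \<le> ff x + gx \<bullet> (P - x) + L/2 * (norm (P - x))^2"
      unfolding gx_def by (rule ff_descent)
    have gxP: "gx \<bullet> (x - P) = - (gx \<bullet> (P - x))" by (simp add: inner_diff_right)
    have yg: "2 * ((gam *\<^sub>R (v j - gx)) \<bullet> (x - P)) \<le> 3/2 * (norm (gam *\<^sub>R (v j - gx)))^2 + 2/3 * (norm (x - P))^2"
      by (rule young2)
    have yg2: "2 * gam * ((v j - gx) \<bullet> (x - P)) \<le> 3/2 * gam^2 * (norm (v j - gx))^2 + 2/3 * (norm (x - P))^2"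
      using yg gam_pos by (simp add: power_mult_distrib)
    have gl: "gam * L = 1/3" using L_pos by (simp add: gam_def)
    have d2: "2 * gam * (gx \<bullet> (x - P)) \<le> 2 * gam * (ff x - ff P) + 1/3 * (norm (x - P))^2"
    proof -
      have "2 * gam * (ff P) \<le> 2 * gam * (ff x + gx \<bullet> (P - x) + L/2 * (norm (P - x))^2)"
        using desc gam_pos by (intro mult_left_mono) auto
      also have "2 * gam * (L/2 * (norm (P - x))^2) = 1/3 * (norm (x - P))^2"
        using gl by (simp add: norm_minus_commute algebra_simps)
      ultimately show ?thesis using gxP by (simp add: algebra_simps)
    qed
    have "(norm (P - xstar))^2 \<le> (norm (x - xstar))^2 - (norm (x - P))^2 + 2 * gam * (hr xstar - hr P)
        + 2 * gam * (v j \<bullet> (xstar - P))"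
      using id vi wP by (simp add: algebra_simps)
    also have "2 * gam * (v j \<bullet> (xstar - P)) = - 2*gam*(v j \<bullet> (x - xstar)) + 2 * gam * (gx \<bullet> (x - P)) + 2 * gam * ((v j - gx) \<bullet> (x - P))"
      unfolding vs by (simp add: algebra_simps)
    finally show ?thesis using d2 yg2 by (simp add: P_def)
  qed
  define R2 where "R2 = (norm (x - xstar))^2"
  define d where "d = x - xstar"
  define I2 where "I2 = gx \<bullet> d"
  define gd where "gd = gs \<bullet> d"
  define SP where "SP = (\<Sum>j<n. (norm (p j - xstar))^2)"
  define SF where "SF = (\<Sum>j<n. ff (p j))"
  define SH where "SH = (\<Sum>j<n. hr (p j))"
  define SVg where "SVg = (\<Sum>j<n. (norm (v j - gs))^2)"
  define SVx where "SVx = (\<Sum>j<n. (norm (v j - gx))^2)"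
  define SA where "SA = (\<Sum>j<n. (norm (a j))^2)"
  define SB where "SB = (\<Sum>j<n. (norm (b j))^2)"
  define P where "P = Psi \<phi>"
  have Np: "N > 0" using N by simp
  have sdv: "(\<Sum>j<n. d \<bullet> (v j - gs)) = N * (I2 - gd)"
    by (simp add: inner_diff_right sum_subtractf inner_sum_right[symmetric] sumv I2_def gd_def
        inner_commute N_def right_diff_distrib)
  have svd: "(\<Sum>j<n. v j \<bullet> d) = N * I2"
    by (simp add: inner_sum_left[symmetric] sumv I2_def)
  have SA_: "SP \<le> N * R2 - 2 * gam * (N * (I2 - gd)) + gam^2 * SVg"
  proof -
    have "SP \<le> (\<Sum>j<n. R2 - 2 * gam * (d \<bullet> (v j - gs)) + gam^2 * (norm (v j - gs))^2)"
      unfolding SP_def R2_def d_def by (rule sum_mono) (rule Aj)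
    also have "\<dots> = N * R2 - 2 * gam * (\<Sum>j<n. d \<bullet> (v j - gs)) + gam^2 * SVg"
      by (simp add: sum.distrib sum_subtractf sum_distrib_left SVg_def N_def)
    finally show ?thesis unfolding sdv .
  qed
  have SB_: "SP \<le> N * R2 + 2*gam*(N * hr xstar - SH) + 2*gam*(N * ff x - SF) - 2*gam*(N * I2) + 3/2*gam^2*SVx"
  proof -
    have "SP \<le> (\<Sum>j<n. R2 + 2*gam*(hr xstar - hr (p j)) + 2*gam*(ff x - ff (p j))
      - 2*gam*(v j \<bullet> d) + 3/2*gam^2*(norm (v j - gx))^2)"
      unfolding SP_def R2_def d_def by (rule sum_mono) (rule Bj)
    also have "\<dots> = (\<Sum>j<n. R2) + (\<Sum>j<n. 2*gam*(hr xstar - hr (p j))) + (\<Sum>j<n. 2*gam*(ff x - ff (p j)))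
      - (\<Sum>j<n. 2*gam*(v j \<bullet> d)) + (\<Sum>j<n. 3/2*gam^2*(norm (v j - gx))^2)"
      by (simp add: sum.distrib sum_subtractf)
    also have "(\<Sum>j<n. 2*gam*(hr xstar - hr (p j))) = 2*gam*(N * hr xstar - SH)"
      by (simp add: sum_distrib_left[symmetric] sum_subtractf SH_def N_def)
    also have "(\<Sum>j<n. 2*gam*(ff x - ff (p j))) = 2*gam*(N * ff x - SF)"
      by (simp add: sum_distrib_left[symmetric] sum_subtractf SF_def N_def)
    also have "(\<Sum>j<n. 2*gam*(v j \<bullet> d)) = 2*gam*(\<Sum>j<n. v j \<bullet> d)"
      by (simp add: sum_distrib_left[symmetric])
    also have "(\<Sum>j<n. 3/2*gam^2*(norm (v j - gx))^2) = 3/2*gam^2*SVx"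
      by (simp only: SVx_def sum_distrib_left)
    also have "(\<Sum>j<n. R2) = N * R2" by (simp add: N_def)
    finally show ?thesis unfolding svd .
  qed
  have V1: "SVg \<le> 2 * SA + 2 * SB"
  proof -
    define bb where "bb = (1 / real n) *\<^sub>R (\<Sum>i<n. b i)"
    have bbe: "bb = gb - gs"
      by (simp add: bb_def b_def gb_def gs_def gg_def sum_subtractf scaleR_diff_right)
    have "SVg \<le> (\<Sum>j<n. 2 * (norm (a j))^2 + 2 * (norm (b j - bb))^2)"
      unfolding SVg_def
    proof (rule sum_mono)
      fix j
      have "v j - gs = a j - (b j - bb)" by (simp add: v_def a_def b_def bbe)
      then show "(norm (v j - gs))^2 \<le> 2 * (norm (a j))^2 + 2 * (norm (b j - bb))^2"
        using sq_le2[of "a j" "b j - bb"] by simp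
    qed
    also have "\<dots> = 2 * SA + 2 * (\<Sum>j<n. (norm (b j - bb))^2)"
      by (simp add: sum.distrib sum_distrib_left SA_def)
    also have "(\<Sum>j<n. (norm (b j - bb))^2) \<le> SB"
      unfolding bb_def SB_def by (rule var_sum[OF n_pos])
    finally show ?thesis by simp
  qed
  have V2: "SVx \<le> 2 * SA + 2 * SB"
  proof -
    define Y where "Y j = a j - b j" for j
    have Ye: "(1 / real n) *\<^sub>R (\<Sum>i<n. Y i) = gx - gb"
      by (simp add: Y_def a_def b_def gb_def gx_def gg_def sum_subtractf scaleR_diff_right)
    have "SVx = (\<Sum>j<n. (norm (Y j - (1 / real n) *\<^sub>R (\<Sum>i<n. Y i)))^2)"
      unfolding SVx_def Ye by (rule sum.cong) (simp_all add: v_def Y_def a_def b_def algebra_simps)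
    also have "\<dots> \<le> (\<Sum>j<n. (norm (Y j))^2)" by (rule var_sum[OF n_pos])
    also have "\<dots> \<le> (\<Sum>j<n. 2 * (norm (a j))^2 + 2 * (norm (b j))^2)"
      unfolding Y_def by (rule sum_mono) (rule sq_le2)
    also have "\<dots> = 2 * SA + 2 * SB" by (simp add: sum.distrib sum_distrib_left SA_def SB_def)
    finally show ?thesis .
  qed
  have C: "N * ff x - N * I2 + SA / (2*L) \<le> N * ff xstar"
  proof -
    have "(\<Sum>i<n. fs i x + f' i x \<bullet> (xstar - x) + (norm (a i))^2 / (2*L)) \<le> (\<Sum>i<n. fs i xstar)"
    proof (rule sum_mono)
      fix i assume "i \<in> {..<n}"
      then show "fs i x + f' i x \<bullet> (xstar - x) + (norm (a i))^2 / (2*L) \<le> fs i xstar"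
        using coco[of i x xstar] by (simp add: a_def norm_minus_commute)
    qed
    moreover have "(\<Sum>i<n. f' i x \<bullet> (xstar - x)) = - (N * I2)"
    proof -
      have "(\<Sum>i<n. f' i x \<bullet> (xstar - x)) = N * (gx \<bullet> (xstar - x))"
        using Np by (simp add: gx_def gg_inner N_def)
      also have "gx \<bullet> (xstar - x) = - I2" by (simp add: I2_def d_def inner_diff_right)
      finally show ?thesis by simp
    qed
    moreover have "(\<Sum>i<n. fs i x) = N * ff x" "(\<Sum>i<n. fs i xstar) = N * ff xstar"
      using Np by (simp_all add: ff_def N_def)
    ultimately show ?thesis
      by (simp add: sum.distrib sum_divide_distrib[symmetric] SA_def)
  qed
  have PB: "SB \<le> 2 * L * (N * P)"
  proof -
    have "SB \<le> (\<Sum>i<n. 2 * L * Dd i (\<phi> i))"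
      unfolding SB_def
    proof (rule sum_mono)
      fix i assume "i \<in> {..<n}"
      then have "(norm (b i))^2 / (2*L) \<le> Dd i (\<phi> i)"
        using coco[of i xstar "\<phi> i"] by (simp add: b_def Dd_def)
      then show "(norm (b i))^2 \<le> 2 * L * Dd i (\<phi> i)"
        using L_pos by (simp add: divide_le_eq mult.commute)
    qed
    also have "\<dots> = 2 * L * (N * P)"
      using Np by (simp add: sum_distrib_left[symmetric] P_def Psi_def N_def)
    finally show ?thesis .
  qed
  have cmb: "SP/N - 3/2*gam*P + 3/2*gam*(ff x - ff xstar - gd) + gam/2*(SF/N + SH/N - ff xstar - hr xstar) \<le> R2"
  proof (rule combine[where L = L and Ix = I2 and AVg = "SVg/N" and AVx = "SVx/N" and AA = "SA/N" and AB = "SB/N"])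
    show "gam = 1 / (3 * L)" by (simp add: gam_def)
    show "0 < L" by (rule L_pos)
    have "SP / N \<le> (N * R2 - 2 * gam * (N * (I2 - gd)) + gam^2 * SVg) / N"
      using SA_ Np by (intro divide_right_mono) auto
    then show "SP / N \<le> R2 - 2 * gam * (I2 - gd) + gam\<^sup>2 * (SVg / N)"
      using Np by (simp add: field_simps)
    have "SP / N \<le> (N * R2 + 2*gam*(N * hr xstar - SH) + 2*gam*(N * ff x - SF) - 2*gam*(N * I2) + 3/2*gam^2*SVx) / N"
      using SB_ Np by (intro divide_right_mono) auto
    also have "(N * R2 + 2*gam*(N * hr xstar - SH) + 2*gam*(N * ff x - SF) - 2*gam*(N * I2) + 3/2*gam^2*SVx) / N
      = R2 + 2 * gam * (hr xstar - SH / N) + 2 * gam * (ff x - SF / N) - 2 * gam * I2 + 3 / 2 * gam\<^sup>2 * (SVx / N)"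
      using Np by (simp add: field_simps)
    finally show "SP / N \<le> R2 + 2 * gam * (hr xstar - SH / N) + 2 * gam * (ff x - SF / N) - 2 * gam * I2 + 3 / 2 * gam\<^sup>2 * (SVx / N)" .
    show "SVg / N \<le> 2 * (SA / N) + 2 * (SB / N)" using V1 Np by (simp add: field_simps)
    show "SVx / N \<le> 2 * (SA / N) + 2 * (SB / N)" using V2 Np by (simp add: field_simps)
    have "(N * ff x - N * I2 + SA / (2*L)) / N \<le> (N * ff xstar) / N"
      using C Np by (intro divide_right_mono) auto
    also have "(N * ff xstar) / N = ff xstar" using Np by simp
    also have "(N * ff x - N * I2 + SA / (2*L)) / N = ff x - I2 + SA / N / (2 * L)"
      using Np L_pos by (simp add: field_simps)
    finally show "ff x - I2 + SA / N / (2 * L) \<le> ff xstar" .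
    show "SB / N \<le> 2 * L * P" using PB Np by (simp add: field_simps)
    show "0 \<le> SA / N" unfolding SA_def using Np by (intro divide_nonneg_pos sum_nonneg) auto
  qed
  have lhs: "(1 / real n) * (\<Sum>j<n. Tf (saga_step f' n gam h j s) + gam/2 * (Fr (fst (saga_step f' n gam h j s)) - Fr xstar))
      = SP/N + 3/2*gam*(N - 1)*P + 3/2*gam*(ff x - ff xstar - gd) + gam/2*(SF/N + SH/N - ff xstar - hr xstar)"
  proof -
    have ps: "(\<Sum>j<n. Psi (\<phi>(j := x))) = (N - 1) * P + (ff x - ff xstar - gd)"
      unfolding Psi_upd by (simp add: N_def P_def gd_def gs_def d_def)
    have "(\<Sum>j<n. Tf (saga_step f' n gam h j s) + gam/2 * (Fr (fst (saga_step f' n gam h j s)) - Fr xstar))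
       = (\<Sum>j<n. (norm (p j - xstar))^2 + 3/2 * gam * N * Psi (\<phi>(j := x)) + gam/2 * (ff (p j) + hr (p j) - Fr xstar))"
      by (simp add: st Tf_def Fr_def N_def)
    also have "\<dots> = SP + 3/2 * gam * N * (\<Sum>j<n. Psi (\<phi>(j := x))) + gam/2 * (SF + SH - N * Fr xstar)"
      by (simp add: sum.distrib sum_subtractf sum_distrib_left[symmetric] SP_def SF_def SH_def N_def algebra_simps)
        (simp add: sum_divide_distrib[symmetric] sum_distrib_left[symmetric])
    also have "\<dots> = SP + 3/2 * gam * N * ((N - 1) * P + (ff x - ff xstar - gd)) + gam/2 * (SF + SH - N * Fr xstar)"
      by (simp only: ps)
    finally have eq: "(\<Sum>j<n. Tf (saga_step f' n gam h j s) + gam/2 * (Fr (fst (saga_step f' n gam h j s)) - Fr xstar))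
       = SP + 3/2 * gam * N * ((N - 1) * P + (ff x - ff xstar - gd)) + gam/2 * (SF + SH - N * Fr xstar)" .
    have n1: "1 / real n = 1 / N" by (simp add: N_def)
    show ?thesis unfolding eq n1 using Np by (simp add: Fr_def field_simps)
  qed
  have rhs: "Tf s = R2 + 3/2*gam*N*P" by (simp add: Tf_def s R2_def N_def P_def)
  have re: "SP/N + 3/2*gam*(N - 1)*P + 3/2*gam*(ff x - ff xstar - gd) + gam/2*(SF/N + SH/N - ff xstar - hr xstar)
     = (SP/N - 3/2*gam*P + 3/2*gam*(ff x - ff xstar - gd) + gam/2*(SF/N + SH/N - ff xstar - hr xstar)) + 3/2*gam*N*P"
    by (simp add: field_simps)
  show ?thesis unfolding lhs rhs re using cmb by linarith
qed


lemma seqs_finite: "finite (index_seqs n k)"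
  unfolding index_seqs_def using finite_lists_length_eq[of "{..<n}" k] by (simp add: conj_commute)

lemma seqs_card: "card (index_seqs n k) = n ^ k"
  unfolding index_seqs_def using card_lists_length_eq[of "{..<n}" k] by (simp add: conj_commute)

lemma seqs_0: "index_seqs n 0 = {[]}"
  by (auto simp: index_seqs_def)

lemma seqs_Suc_sum:
  "(\<Sum>js\<in>index_seqs n (Suc k). g js) = (\<Sum>js\<in>index_seqs n k. \<Sum>j<n. g (js @ [j]))"
proof -
  have e: "index_seqs n (Suc k) = (\<lambda>(js, j). js @ [j]) ` (index_seqs n k \<times> {..<n})"
  proof
    show "index_seqs n (Suc k) \<subseteq> (\<lambda>(js, j). js @ [j]) ` (index_seqs n k \<times> {..<n})"
    proof
      fix xs assume "xs \<in> index_seqs n (Suc k)"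
      then have xs: "length xs = Suc k" "set xs \<subseteq> {..<n}" by (auto simp: index_seqs_def)
      then obtain y ys where "xs = ys @ [y]" "length ys = k" by (metis length_Suc_conv_rev)
      with xs show "xs \<in> (\<lambda>(js, j). js @ [j]) ` (index_seqs n k \<times> {..<n})"
        by (auto simp: index_seqs_def image_iff)
    qed
    show "(\<lambda>(js, j). js @ [j]) ` (index_seqs n k \<times> {..<n}) \<subseteq> index_seqs n (Suc k)"
      by (auto simp: index_seqs_def)
  qed
  have inj: "inj_on (\<lambda>(js, j). js @ [j]) (index_seqs n k \<times> {..<n})"
    by (auto simp: inj_on_def)
  show ?thesis
    unfolding e sum.reindex[OF inj] sum.cartesian_product by (simp add: case_prod_beta)
qed

lemma run_snoc: "saga_run f' n gam h x0 (js @ [j]) = saga_step f' n gam h j (saga_run f' n gam h x0 js)"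
  by (simp add: saga_run_def)

lemma iter_snoc_le: "t \<le> length js \<Longrightarrow> saga_iter f' n gam h x0 (js @ [j]) t = saga_iter f' n gam h x0 js t"
  by (simp add: saga_iter_def)

lemma iter_snoc_last:
  "saga_iter f' n gam h x0 (js @ [j]) (Suc (length js)) = fst (saga_step f' n gam h j (saga_run f' n gam h x0 js))"
  by (simp add: saga_iter_def run_snoc)

lemma iter_fin: "1 \<le> t \<Longrightarrow> t \<le> length js \<Longrightarrow> h (saga_iter f' n gam h x0 js t) \<noteq> \<infinity>"
proof -
  assume t: "1 \<le> t" "t \<le> length js"
  then obtain i where i: "t = Suc i" "i < length js" by (cases t) auto
  have "take t js = take i js @ [js ! i]" using i by (simp add: take_Suc_conv_app_nth)
  then show ?thesis by (simp add: saga_iter_def run_snoc step_fin)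
qed

definition Qk where "Qk x0 k = (\<Sum>js\<in>index_seqs n k. Tf (saga_run f' n gam h x0 js)
   + gam/2 * (\<Sum>t\<in>{1..k}. Fr (saga_iter f' n gam h x0 js t) - Fr xstar))"

lemma Q_bound: "Qk x0 k \<le> real n ^ k * Tf (x0, \<lambda>_. x0)"
proof (induction k)
  case 0
  show ?case by (simp add: Qk_def seqs_0 saga_run_def)
next
  case (Suc k)
  define A where "A js = (\<Sum>t\<in>{1..k}. Fr (saga_iter f' n gam h x0 js t) - Fr xstar)" for js
  define run where "run js = saga_run f' n gam h x0 js" for js
  have "Qk x0 (Suc k) = (\<Sum>js\<in>index_seqs n k. \<Sum>j<n. Tf (saga_step f' n gam h j (run js))
       + gam/2 * (A js + (Fr (fst (saga_step f' n gam h j (run js))) - Fr xstar)))"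
    unfolding Qk_def seqs_Suc_sum
  proof (intro sum.cong refl)
    fix js j assume js: "js \<in> index_seqs n k"
    then have lj: "length js = k" by (simp add: index_seqs_def)
    have "(\<Sum>t\<in>{1..Suc k}. Fr (saga_iter f' n gam h x0 (js @ [j]) t) - Fr xstar)
       = (\<Sum>t\<in>{1..k}. Fr (saga_iter f' n gam h x0 (js @ [j]) t) - Fr xstar)
         + (Fr (saga_iter f' n gam h x0 (js @ [j]) (Suc k)) - Fr xstar)"
      by simp
    also have "(\<Sum>t\<in>{1..k}. Fr (saga_iter f' n gam h x0 (js @ [j]) t) - Fr xstar) = A js"
      unfolding A_def by (rule sum.cong) (auto simp: iter_snoc_le lj)
    also have "saga_iter f' n gam h x0 (js @ [j]) (Suc k) = fst (saga_step f' n gam h j (run js))"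
      using iter_snoc_last[of x0 js j] lj by (simp add: run_def)
    finally show "Tf (saga_run f' n gam h x0 (js @ [j])) + gam / 2 * (\<Sum>t\<in>{1..Suc k}. Fr (saga_iter f' n gam h x0 (js @ [j]) t) - Fr xstar)
       = Tf (saga_step f' n gam h j (run js)) + gam/2 * (A js + (Fr (fst (saga_step f' n gam h j (run js))) - Fr xstar))"
      by (simp add: run_snoc run_def)
  qed
  also have "\<dots> \<le> (\<Sum>js\<in>index_seqs n k. real n * (Tf (run js) + gam/2 * A js))"
  proof (rule sum_mono)
    fix js
    have st: "(1 / real n) * (\<Sum>j<n. Tf (saga_step f' n gam h j (run js)) + gam/2 * (Fr (fst (saga_step f' n gam h j (run js))) - Fr xstar)) \<le> Tf (run js)"
      by (rule step)
    have np: "real n > 0" using n_pos by simp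
    have st2: "(\<Sum>j<n. Tf (saga_step f' n gam h j (run js)) + gam/2 * (Fr (fst (saga_step f' n gam h j (run js))) - Fr xstar)) \<le> real n * Tf (run js)"
      using st np by (simp add: divide_le_eq mult.commute)
    have "(\<Sum>j<n. Tf (saga_step f' n gam h j (run js)) + gam/2 * (A js + (Fr (fst (saga_step f' n gam h j (run js))) - Fr xstar)))
      = (\<Sum>j<n. Tf (saga_step f' n gam h j (run js)) + gam/2 * (Fr (fst (saga_step f' n gam h j (run js))) - Fr xstar)) + real n * (gam/2 * A js)"
      by (simp add: sum.distrib distrib_left)
    also have "\<dots> \<le> real n * (Tf (run js) + gam/2 * A js)"
      using st2 by (simp add: distrib_left)
    finally show "(\<Sum>j<n. Tf (saga_step f' n gam h j (run js)) + gam/2 * (A js + (Fr (fst (saga_step f' n gam h j (run js))) - Fr xstar)))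
      \<le> real n * (Tf (run js) + gam/2 * A js)" .
  qed
  also have "\<dots> = real n * Qk x0 k"
    by (simp add: Qk_def sum_distrib_left A_def run_def)
  also have "\<dots> \<le> real n * (real n ^ k * Tf (x0, \<lambda>_. x0))"
    using Suc.IH by (intro mult_left_mono) auto
  finally show ?case by simp
qed

lemma jensen:
  assumes k: "k \<ge> 1" and lj: "length js = k"
  shows "h (saga_avg f' n gam h x0 js k) \<noteq> \<infinity>"
    and "Fr (saga_avg f' n gam h x0 js k) \<le> (1 / real k) * (\<Sum>t\<in>{1..k}. Fr (saga_iter f' n gam h x0 js t))"
proof -
  define X where "X t = saga_iter f' n gam h x0 js t" for t
  define c where "c = 1 / real k"
  have avg: "saga_avg f' n gam h x0 js k = (\<Sum>t\<in>{1..k}. c *\<^sub>R X t)"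
    by (simp add: saga_avg_def scaleR_sum_right X_def c_def)
  have c1: "(\<Sum>t\<in>{1..k}. c) = 1" using k by (simp add: c_def)
  have c0: "c \<ge> 0" by (simp add: c_def)
  have Xf: "t \<in> {1..k} \<Longrightarrow> h (X t) \<noteq> \<infinity>" for t using iter_fin[of t js] lj by (auto simp: X_def)
  have ne: "{1..k} \<noteq> {}" using k by simp
  have "(\<Sum>t\<in>{1..k}. c *\<^sub>R (X t, hr (X t))) \<in> epigraph h"
    by (rule convex_sum[OF _ h_convex[unfolded convex_fun_def]])
       (use c1 c0 Xf h_eq in \<open>auto simp: epigraph_def\<close>)
  moreover have "(\<Sum>t\<in>{1..k}. c *\<^sub>R (X t, hr (X t))) = ((\<Sum>t\<in>{1..k}. c *\<^sub>R X t), (\<Sum>t\<in>{1..k}. c * hr (X t)))"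
    by (simp add: prod_eq_iff fst_sum snd_sum)
  ultimately have hb: "h (saga_avg f' n gam h x0 js k) \<le> ereal (\<Sum>t\<in>{1..k}. c * hr (X t))"
    by (simp add: epigraph_def avg)
  then show hf: "h (saga_avg f' n gam h x0 js k) \<noteq> \<infinity>" by auto
  have hr_b: "hr (saga_avg f' n gam h x0 js k) \<le> (\<Sum>t\<in>{1..k}. c * hr (X t))"
    using hb h_eq[OF hf] by simp
  have fi: "fs i (saga_avg f' n gam h x0 js k) \<le> (\<Sum>t\<in>{1..k}. c * fs i (X t))" if i: "i < n" for i
    unfolding avg by (rule convex_on_sum[OF _ ne conv[OF i] c1]) (use c0 in auto)
  have "ff (saga_avg f' n gam h x0 js k) \<le> (1 / real n) * (\<Sum>i<n. \<Sum>t\<in>{1..k}. c * fs i (X t))"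
    unfolding ff_def by (intro mult_left_mono sum_mono fi) auto
  also have "\<dots> = (\<Sum>t\<in>{1..k}. c * ff (X t))"
    by (simp add: ff_def sum_distrib_left sum.swap[of _ "{..<n}"] mult_ac)
  finally have ff_b: "ff (saga_avg f' n gam h x0 js k) \<le> (\<Sum>t\<in>{1..k}. c * ff (X t))" .
  show "Fr (saga_avg f' n gam h x0 js k) \<le> (1 / real k) * (\<Sum>t\<in>{1..k}. Fr (saga_iter f' n gam h x0 js t))"
    using ff_b hr_b by (simp add: Fr_def c_def X_def sum_distrib_left sum.distrib distrib_left)
qed


lemma main:
  assumes k: "k \<ge> 1"
  shows "ereal (1 / real n ^ k) * (\<Sum>js\<in>index_seqs n k. ereal (ff (saga_avg f' n gam h x0 js k)) + h (saga_avg f' n gam h x0 js k))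
      - (ereal (ff xstar) + h xstar)
   \<le> ereal (4 * real n / real k * (2 * L / real n * (norm (x0 - xstar))^2 + ff x0 - gg xstar \<bullet> (x0 - xstar) - ff xstar))"
proof -
  define avg where "avg js = saga_avg f' n gam h x0 js k" for js
  define it where "it js t = saga_iter f' n gam h x0 js t" for js t
  define A where "A js = (\<Sum>t\<in>{1..k}. Fr (it js t) - Fr xstar)" for js
  define NK where "NK = real n ^ k"
  define T0 where "T0 = Tf (x0, \<lambda>_. x0)"
  define Psi0 where "Psi0 = ff x0 - ff xstar - gg xstar \<bullet> (x0 - xstar)"
  have NKp: "NK > 0" using n_pos by (simp add: NK_def)
  have kp: "real k > 0" using k by simp
  have cardS: "real (card (index_seqs n k)) = NK" by (simp add: seqs_card NK_def)
  have lenS: "js \<in> index_seqs n k \<Longrightarrow> length js = k" for js by (simp add: index_seqs_def)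
  have Feq: "ereal (ff (avg js)) + h (avg js) = ereal (Fr (avg js))" if "js \<in> index_seqs n k" for js
    using h_eq[OF jensen(1)[OF k lenS[OF that], of x0]] by (simp add: Fr_def avg_def)
  have lhs: "ereal (1 / real n ^ k) * (\<Sum>js\<in>index_seqs n k. ereal (ff (avg js)) + h (avg js)) - (ereal (ff xstar) + h xstar)
     = ereal ((1 / NK) * (\<Sum>js\<in>index_seqs n k. Fr (avg js)) - Fr xstar)"
  proof -
    have "(\<Sum>js\<in>index_seqs n k. ereal (ff (avg js)) + h (avg js)) = (\<Sum>js\<in>index_seqs n k. ereal (Fr (avg js)))"
      by (rule sum.cong) (auto simp: Feq)
    moreover have "ereal (ff xstar) + h xstar = ereal (Fr xstar)" using h_eq[OF hs_fin] by (simp add: Fr_def)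
    ultimately show ?thesis by (simp add: NK_def)
  qed
  have J: "(\<Sum>js\<in>index_seqs n k. Fr (avg js)) \<le> (\<Sum>js\<in>index_seqs n k. (1 / real k) * (\<Sum>t\<in>{1..k}. Fr (it js t)))"
    by (rule sum_mono) (use jensen(2)[OF k lenS] in \<open>auto simp: avg_def it_def\<close>)
  have Ae: "(\<Sum>t\<in>{1..k}. Fr (it js t)) = A js + real k * Fr xstar" for js
    by (simp add: A_def sum_subtractf)
  have J2: "(\<Sum>js\<in>index_seqs n k. (1 / real k) * (\<Sum>t\<in>{1..k}. Fr (it js t)))
      = (1 / real k) * (\<Sum>js\<in>index_seqs n k. A js) + NK * Fr xstar"
  proof -
    have "(\<Sum>js\<in>index_seqs n k. (1 / real k) * (\<Sum>t\<in>{1..k}. Fr (it js t)))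
       = (\<Sum>js\<in>index_seqs n k. (1 / real k) * A js + Fr xstar)"
      by (rule sum.cong[OF refl], subst Ae) (use kp in \<open>simp add: field_simps\<close>)
    also have "\<dots> = (1 / real k) * (\<Sum>js\<in>index_seqs n k. A js) + NK * Fr xstar"
      by (simp add: sum.distrib sum_distrib_left cardS)
    finally show ?thesis .
  qed
  have Qb: "(\<Sum>js\<in>index_seqs n k. A js) \<le> 2 / gam * (NK * T0)"
  proof -
    have "gam/2 * (\<Sum>js\<in>index_seqs n k. A js) = (\<Sum>js\<in>index_seqs n k. gam/2 * A js)"
      by (simp add: sum_distrib_left)
    also have "\<dots> \<le> (\<Sum>js\<in>index_seqs n k. Tf (saga_run f' n gam h x0 js) + gam/2 * A js)"
      by (rule sum_mono) (use Tf_nonneg in simp)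
    also have "\<dots> = Qk x0 k" by (simp add: Qk_def A_def it_def)
    also have "\<dots> \<le> NK * T0" using Q_bound by (simp add: NK_def T0_def)
    finally show ?thesis using gam_pos by (simp add: field_simps)
  qed
  have real_b: "(1 / NK) * (\<Sum>js\<in>index_seqs n k. Fr (avg js)) - Fr xstar \<le> 2 * T0 / (gam * real k)"
  proof -
    have "(1 / NK) * (\<Sum>js\<in>index_seqs n k. Fr (avg js)) \<le> (1 / NK) * ((1 / real k) * (\<Sum>js\<in>index_seqs n k. A js) + NK * Fr xstar)"
      using J J2 NKp by (intro mult_left_mono) auto
    also have "\<dots> = (1 / (NK * real k)) * (\<Sum>js\<in>index_seqs n k. A js) + Fr xstar"
      using NKp kp by (simp add: field_simps)
    also have "(1 / (NK * real k)) * (\<Sum>js\<in>index_seqs n k. A js) \<le> (1 / (NK * real k)) * (2 / gam * (NK * T0))"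
      using Qb NKp kp by (intro mult_left_mono) auto
    also have "(1 / (NK * real k)) * (2 / gam * (NK * T0)) = 2 * T0 / (gam * real k)"
      using NKp kp gam_pos by (simp add: field_simps)
    finally show ?thesis by simp
  qed
  have P0: "Psi (\<lambda>_. x0) = Psi0" unfolding Psi_def Psi0_def by (rule Dd_avg)
  have T0e: "T0 = (norm (x0 - xstar))^2 + 3/2 * gam * real n * Psi0"
    by (simp add: T0_def Tf_def P0)
  have Psi0_nn: "Psi0 \<ge> 0" using Psi_nonneg[of "\<lambda>_. x0"] by (simp add: P0)
  have fin: "2 * T0 / (gam * real k) \<le> 4 * real n / real k * (2 * L / real n * (norm (x0 - xstar))^2 + ff x0 - gg xstar \<bullet> (x0 - xstar) - ff xstar)"
  proof -
    have g: "gam = 1 / (3 * L)" by (simp add: gam_def)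
    have np: "real n > 0" using n_pos by simp
    have "2 * T0 / (gam * real k) = (6 * L * (norm (x0 - xstar))^2 + 3 * real n * Psi0) / real k"
      unfolding T0e g using L_pos kp by (simp add: field_simps)
    also have "\<dots> \<le> (8 * L * (norm (x0 - xstar))^2 + 4 * real n * Psi0) / real k"
      using L_pos Psi0_nn np kp by (intro divide_right_mono add_mono mult_right_mono) auto
    also have "\<dots> = 4 * real n / real k * (2 * L / real n * (norm (x0 - xstar))^2 + ff x0 - gg xstar \<bullet> (x0 - xstar) - ff xstar)"
      using np kp by (simp add: Psi0_def field_simps)
    finally show ?thesis .
  qed
  show ?thesis
    unfolding avg_def[symmetric] lhs using real_b fin by simp
qed

end


theorem theorem2:
  fixes fs :: "nat \<Rightarrow> 'a::euclidean_space \<Rightarrow> real"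
    and f' :: "nat \<Rightarrow> 'a \<Rightarrow> 'a"
    and h :: "'a \<Rightarrow> ereal"
    and n k :: nat and L :: real and x0 xstar :: 'a
  assumes n_pos: "n \<ge> 1"
    and L_pos: "L > 0"
    and conv: "\<And>i. i < n \<Longrightarrow> convex_on UNIV (fs i)"
    and grad: "\<And>i x. i < n \<Longrightarrow> (fs i has_derivative (\<lambda>v. f' i x \<bullet> v)) (at x)"
    and lip: "\<And>i x y. i < n \<Longrightarrow> norm (f' i x - f' i y) \<le> L * norm (x - y)"
    and h_proper: "proper_fun h" and h_closed: "closed_fun h" and h_convex: "convex_fun h"
    and min: "\<And>x. ereal ((1 / real n) * (\<Sum>i<n. fs i xstar)) + h xstar
                 \<le> ereal ((1 / real n) * (\<Sum>i<n. fs i x)) + h x"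
    and k_pos: "k \<ge> 1"
  shows
    "(let f = (\<lambda>x. (1 / real n) * (\<Sum>i<n. fs i x));
          fgrad = (\<lambda>x. (1 / real n) *\<^sub>R (\<Sum>i<n. f' i x));
          F = (\<lambda>x. ereal (f x) + h x);
          \<gamma> = 1 / (3 * L)
      in ereal (1 / real n ^ k) * (\<Sum>js\<in>index_seqs n k. F (saga_avg f' n \<gamma> h x0 js k)) - F xstar
         \<le> ereal (4 * real n / real k *
              (2 * L / real n * (norm (x0 - xstar))\<^sup>2 + f x0 - fgrad xstar \<bullet> (x0 - xstar) - f xstar)))"
proof -
  interpret saga fs f' h n L xstar
    by (unfold_locales) (use assms in auto)
  have "ereal (1 / real n ^ k) * (\<Sum>js\<in>index_seqs n k. ereal (ff (saga_avg f' n gam h x0 js k)) + h (saga_avg f' n gam h x0 js k))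
      - (ereal (ff xstar) + h xstar)
   \<le> ereal (4 * real n / real k * (2 * L / real n * (norm (x0 - xstar))^2 + ff x0 - gg xstar \<bullet> (x0 - xstar) - ff xstar))"
    by (rule main[OF k_pos])
  then show ?thesis
    unfolding Let_def ff_def gg_def gam_def .
qed

end
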